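(* Let $p\ge 1$, let $F:\mathbb{R}^p\to\mathbb{R}^p$, $G(\boldsymbol{x}):=F(\boldsymbol{x})-\boldsymbol{x}$, and $\boldsymbol{x}^\ast\in\mathbb{R}^p$. Assume (A1): $G$ is differentiable in an open convex set $D$ containing $\boldsymbol{x}^\ast$, $G(\boldsymbol{x}^\ast)=0$, $dG(\boldsymbol{x}^\ast)$ is non-singular, and for some constants $d>0$ and $K$, $\|dG(\boldsymbol{x})-dG(\boldsymbol{x}^\ast)\|\le K\|\boldsymbol{x}-\boldsymbol{x}^\ast\|^d$ for all $\boldsymbol{x}\in D$. Suppose there exist a constant $\mu_2\ge 0$, a non-singular symmetric matrix $M\in\mathbb{R}^{p\times p}$ and a neighborhood $N'$ of $(\boldsymbol{x}^\ast,dG(\boldsymbol{x}^\ast)^{-1})$ such that for all $(\boldsymbol{x},H)\in N'$, with $\boldsymbol{v}=G(F(\boldsymbol{x}))-G(\boldsymbol{x})\ne 0$, $\frac{\|M\boldsymbol{v}-M^{-1}\boldsymbol{v}\|}{\|M^{-1}\boldsymbol{v}\|}\le\mu_2\|\boldsymbol{v}\|^d$. Let $\{(\boldsymbol{x}_k,H_k)\}$ be the iteration $\boldsymbol{x}_{k+1}=\boldsymbol{x}_k-H_kG(\boldsymbol{x}_k)$, $H_{k+1}=H_k-H_k\frac{\boldsymbol{v}_k\boldsymbol{v}_k^T}{\boldsymbol{v}_k^T\boldsymbol{v}_k}+\frac{\boldsymbol{u}_k\boldsymbol{v}_k^T}{\boldsymbol{v}_k^T\boldsymbol{v}_k}$,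 where $\boldsymbol{u}_k=F(\boldsymbol{x}_k)-\boldsymbol{x}_k$, $\boldsymbol{v}_k=G(F(\boldsymbol{x}_k))-G(\boldsymbol{x}_k)$, started with $(\boldsymbol{x}_0,H_0)$ sufficiently close to $(\boldsymbol{x}^\ast,dG(\boldsymbol{x}^\ast)^{-1})$ (in $\|\cdot\|$ and $\|\cdot\|_M$ respectively) that it is well-defined and converges to $\boldsymbol{x}^\ast$. If further $$\lim_{k\to\infty}\frac{\|\boldsymbol{x}_{k+1}-F(\boldsymbol{x}_k)\|}{\|\boldsymbol{x}_k-\boldsymbol{x}^\ast\|}=0,$$ then $\{\boldsymbol{x}_k\}$ converges to $\boldsymbol{x}^\ast$ Q-superlinearly.
   Context: $F$ is a majorization–minimization (MM) algorithm map and $G$ its residual; $dG$ denotes the Jacobian of $G$. $\|\cdot\|$ is a chosen vector norm on $\mathbb{R}^p$ and, for matrices, its induced operator norm; $\|A\|_M:=\|MAM\|_F$ with $\|\cdot\|_F$ the Frobenius norm. Standing assumption: the MM map is locally convergent to $\boldsymbol{x}^\ast$ in a neighborhood $S$ of $\boldsymbol{x}^\ast$ with linear rate $\tau$, i.e. $\|F(\boldsymbol{x})-\boldsymbol{x}^\ast\|\le\tau\|\boldsymbol{x}-\boldsymbol{x}^\ast\|$ for all $\boldsymbol{x}\in S$, with $\tau\in(0,1)$. Q-superlinear convergence means $\|\boldsymbol{x}_{k+1}-\boldsymbol{x}^\ast\|/\|\boldsymbol{x}_k-\boldsymbol{x}^\ast\|\to 0$ as $k\to\infty$. *)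

theory Defs
  imports "HOL-Analysis.Analysis"
begin

definition is_vec_norm :: "(real^'n \<Rightarrow> real) \<Rightarrow> bool" where
  "is_vec_norm N \<longleftrightarrow>
     (\<forall>x. 0 \<le> N x) \<and> (\<forall>x. N x = 0 \<longleftrightarrow> x = 0) \<and>
     (\<forall>c x. N (c *\<^sub>R x) = \<bar>c\<bar> * N x) \<and>
     (\<forall>x y. N (x + y) \<le> N x + N y)"

definition induced_opnorm :: "(real^'n \<Rightarrow> real) \<Rightarrow> real^'n^'n \<Rightarrow> real" where
  "induced_opnorm N A = (SUP x\<in>{x. x \<noteq> 0}. N (A *v x) / N x)"

definition frob_norm :: "real^'n^'n \<Rightarrow> real" where
  "frob_norm A = sqrt (\<Sum>i\<in>UNIV. \<Sum>j\<in>UNIV. (A $ i $ j)^2)"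

definition M_norm :: "real^'n^'n \<Rightarrow> real^'n^'n \<Rightarrow> real" where
  "M_norm M A = frob_norm (M ** A ** M)"

definition outer :: "real^'n \<Rightarrow> real^'n \<Rightarrow> real^'n^'n" where
  "outer u v = (\<chi> i j. u $ i * v $ j)"

end

theory Submission
  imports Defs
begin


lemma vn_props:
  assumes "is_vec_norm N"
  shows vn_nonneg: "0 \<le> N x" and vn_zero: "N 0 = 0" and vn_neg: "N (-x) = N x"
    and vn_tri: "N (x + y) \<le> N x + N y" and vn_scale: "N (c *\<^sub>R x) = \<bar>c\<bar> * N x"
    and vn_eq0: "N x = 0 \<longleftrightarrow> x = 0"
  using assms unfolding is_vec_norm_def
  apply auto
  by (metis abs_minus_cancel abs_one mult_cancel_right1 scaleR_minus1_left)

lemma vn_commute: assumes "is_vec_norm N" shows "N (x - y) = N (y - x)"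
  using vn_neg[OF assms, of "x - y"] by simp

lemma vn_diff: assumes "is_vec_norm N" shows "N x - N y \<le> N (x - y)"
  using vn_tri[OF assms, of "x - y" y] by simp

lemma vn_sum: assumes "is_vec_norm N" and "finite A"
  shows "N (sum f A) \<le> (\<Sum>i\<in>A. N (f i))"
  using assms(2)
proof (induction A rule: finite_induct)
  case empty then show ?case using vn_zero[OF assms(1)] by simp
next
  case (insert a A)
  then show ?case using vn_tri[OF assms(1), of "f a" "sum f A"] by simp
qed

lemma vn_upper:
  fixes N :: "real^'n \<Rightarrow> real"
  assumes "is_vec_norm N" shows "\<exists>C>0. \<forall>x. N x \<le> C * norm x"
proof -
  define C where "C = 1 + (\<Sum>i\<in>UNIV. N (axis i (1::real)))"
  have C0: "C > 0" unfolding C_def using vn_nonneg[OF assms] by (simp add: add_pos_nonneg sum_nonneg)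
  have "N x \<le> C * norm x" for x
  proof -
    have "N x = N (\<Sum>i\<in>UNIV. (x$i) *s axis i 1)" by (simp add: basis_expansion)
    also have "\<dots> \<le> (\<Sum>i\<in>UNIV. N ((x$i) *s axis i 1))" by (rule vn_sum[OF assms]) simp
    also have "\<dots> = (\<Sum>i\<in>UNIV. \<bar>x$i\<bar> * N (axis i 1))"
      using vn_scale[OF assms] by (simp add: scalar_mult_eq_scaleR)
    also have "\<dots> \<le> (\<Sum>i\<in>UNIV. norm x * N (axis i 1))"
      by (rule sum_mono, rule mult_right_mono, simp add: component_le_norm_cart, rule vn_nonneg[OF assms])
    also have "\<dots> \<le> C * norm x" unfolding C_def by (simp add: sum_distrib_left[symmetric] algebra_simps)
    finally show ?thesis .
  qed
  then show ?thesis using C0 by blast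
qed

lemma vn_lower:
  fixes N :: "real^'n \<Rightarrow> real"
  assumes "is_vec_norm N" shows "\<exists>c>0. \<forall>x. c * norm x \<le> N x"
proof -
  obtain C where C: "C > 0" "\<And>x. N x \<le> C * norm x" using vn_upper[OF assms] by blast
  have cont: "continuous_on (sphere 0 1) N"
    unfolding continuous_on_iff
  proof (intro ballI allI impI)
    fix x e assume "(e::real) > 0"
    show "\<exists>d>0. \<forall>x'\<in>sphere 0 1. dist x' x < d \<longrightarrow> dist (N x') (N x) < e"
    proof (intro exI[of _ "e / C"] conjI ballI impI)
      show "e / C > 0" using C \<open>e>0\<close> by simp
      fix x' assume "x' \<in> sphere 0 1" "dist x' x < e / C"
      have "\<bar>N x' - N x\<bar> \<le> C * norm (x' - x)"
        using vn_diff[OF assms, of x' x] vn_diff[OF assms, of x x'] C(2)[of "x' - x"]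
          C(2)[of "x - x'"] vn_commute[OF assms, of x x'] by (simp add: abs_le_iff norm_minus_commute)
      also have "\<dots> < e" using \<open>dist x' x < e / C\<close> C by (simp add: dist_norm field_simps)
      finally show "dist (N x') (N x) < e" by (simp add: dist_real_def)
    qed
  qed
  obtain z :: "real^'n" where z: "norm z = 1" using vector_choose_size[of 1] by auto
  have "sphere (0::real^'n) 1 \<noteq> {}" using z by auto
  then obtain x0 where x0: "x0 \<in> sphere 0 1" "\<And>y. y \<in> sphere 0 1 \<Longrightarrow> N x0 \<le> N y"
    using continuous_attains_inf[OF compact_sphere _ cont] by blast
  have "x0 \<noteq> 0" using x0(1) by auto
  then have m: "N x0 > 0" using vn_nonneg[OF assms, of x0] vn_eq0[OF assms, of x0] by linarith
  have "N x0 * norm x \<le> N x" for x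
  proof (cases "x = 0")
    case True then show ?thesis using vn_zero[OF assms] by simp
  next
    case False
    then have "(1 / norm x) *\<^sub>R x \<in> sphere 0 1" by simp
    then have "N x0 \<le> N ((1 / norm x) *\<^sub>R x)" by (rule x0(2))
    also have "\<dots> = N x / norm x" using vn_scale[OF assms] by simp
    finally show ?thesis using False by (simp add: field_simps)
  qed
  then show ?thesis using m by blast
qed

lemma norm_sq_vec: "(norm (x::'a::real_inner^'n))^2 = (\<Sum>i\<in>UNIV. (norm (x$i))^2)"
  by (simp add: power2_norm_eq_inner inner_vec_def)

lemma mat_vec_norm: "norm ((A::real^'n^'m) *v x) \<le> norm A * norm x"
proof -
  have "(norm (A *v x))^2 = (\<Sum>i\<in>UNIV. (inner (A$i) x)^2)"
    by (simp add: norm_sq_vec matrix_mult_dot)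
  also have "\<dots> \<le> (\<Sum>i\<in>UNIV. (norm (A$i))^2 * (norm x)^2)"
  proof (rule sum_mono)
    fix i
    have "\<bar>inner (A$i) x\<bar> \<le> norm (A$i) * norm x" by (rule Cauchy_Schwarz_ineq2)
    then have "(inner (A$i) x)^2 \<le> (norm (A$i) * norm x)^2"
      by (metis abs_ge_zero power2_abs power_mono)
    then show "(inner (A$i) x)^2 \<le> (norm (A$i))^2 * (norm x)^2" by (simp add: power_mult_distrib)
  qed
  also have "\<dots> = (norm A * norm x)^2"
    by (simp add: norm_sq_vec[of A] power_mult_distrib sum_distrib_right)
  finally show ?thesis by (simp add: power2_le_iff_abs_le)
qed

lemma outer_row: "outer a b $ i = a $ i *\<^sub>R b"
  by (simp add: outer_def vec_eq_iff)

lemma outer_norm: "norm (outer (w::real^'n) (v::real^'n)) = norm w * norm v"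
proof -
  have "(norm (outer w v))^2 = (norm w * norm v)^2"
    by (simp add: norm_sq_vec[of "outer w v"] outer_row power_mult_distrib norm_sq_vec[of w] sum_distrib_right)
  then show ?thesis by (simp add: power2_eq_iff_nonneg)
qed

lemma outer_mv: "outer a b *v c = inner b c *\<^sub>R a"
  by (simp add: matrix_mult_dot outer_row vec_eq_iff inner_vec_def sum_distrib_left mult.commute mult.left_commute)

lemma mat_outer_mv: "(X ** outer a b) *v c = inner b c *\<^sub>R (X *v a)"
  by (simp add: matrix_vector_mul_assoc[symmetric] outer_mv matrix_vector_mult_scaleR)

lemma mat_outer_row: "(X ** outer a b) $ i = inner (X$i) a *\<^sub>R b"
  by (simp add: vec_eq_iff matrix_matrix_mult_def outer_def inner_vec_def sum_distrib_right mult.assoc)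

lemma proj_norm:
  fixes X :: "real^'n^'m" and v :: "real^'n"
  assumes "v \<noteq> 0"
  shows "(norm (X - (1 / inner v v) *\<^sub>R (X ** outer v v)))^2 = (norm X)^2 - (norm (X *v v))^2 / inner v v"
proof -
  have vv: "inner v v > 0" using assms by simp
  have row: "(norm (X$i - (inner (X$i) v / inner v v) *\<^sub>R v))^2
        = (norm (X$i))^2 - (inner (X$i) v)^2 / inner v v" for i
  proof -
    have "(norm (X$i - (inner (X$i) v / inner v v) *\<^sub>R v))^2
      = inner (X$i - (inner (X$i) v / inner v v) *\<^sub>R v) (X$i - (inner (X$i) v / inner v v) *\<^sub>R v)"
      by (simp add: power2_norm_eq_inner)
    also have "\<dots> = inner (X$i) (X$i) - 2 * (inner (X$i) v)^2 / inner v v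
        + (inner (X$i) v)^2 / (inner v v)^2 * inner v v"
      by (simp add: inner_diff_left inner_diff_right inner_commute power2_eq_square field_simps)
    also have "\<dots> = (norm (X$i))^2 - (inner (X$i) v)^2 / inner v v"
      using vv by (simp add: power2_norm_eq_inner[symmetric] power2_eq_square field_simps)
    finally show ?thesis .
  qed
  have "(norm (X - (1 / inner v v) *\<^sub>R (X ** outer v v)))^2
      = (\<Sum>i\<in>UNIV. (norm (X$i))^2 - (inner (X$i) v)^2 / inner v v)"
    by (simp add: norm_sq_vec[of "X - _"] mat_outer_row row)
  also have "\<dots> = (norm X)^2 - (norm (X *v v))^2 / inner v v"
  proof -
    have "(norm (X *v v))^2 = (\<Sum>i\<in>UNIV. (inner (X$i) v)^2)"
      by (simp add: norm_sq_vec matrix_mult_dot)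
    then show ?thesis by (simp add: sum_subtractf norm_sq_vec[of X] sum_divide_distrib)
  qed
  finally show ?thesis .
qed



definition lo :: "(nat \<Rightarrow> real) \<Rightarrow> (nat \<Rightarrow> real) \<Rightarrow> bool" where
  "lo a b \<longleftrightarrow> (\<forall>\<eta>>0. eventually (\<lambda>k. a k \<le> \<eta> * b k) sequentially)"

lemma loD: "lo a b \<Longrightarrow> \<eta> > 0 \<Longrightarrow> eventually (\<lambda>k. a k \<le> \<eta> * b k) sequentially"
  unfolding lo_def by blast

lemma lo_add: assumes "lo a b" "lo c b" shows "lo (\<lambda>k. a k + c k) b"
  unfolding lo_def
proof (intro allI impI)
  fix \<eta> :: real assume "\<eta> > 0"
  then have "eventually (\<lambda>k. a k \<le> (\<eta>/2) * b k) sequentially" "eventually (\<lambda>k. c k \<le> (\<eta>/2) * b k) sequentially"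
    using loD[OF assms(1), of "\<eta>/2"] loD[OF assms(2), of "\<eta>/2"] by auto
  then show "eventually (\<lambda>k. a k + c k \<le> \<eta> * b k) sequentially"
    by eventually_elim (simp add: field_simps)
qed

lemma lo_mono: assumes "lo a b" "eventually (\<lambda>k. c k \<le> a k) sequentially" shows "lo c b"
  unfolding lo_def
proof (intro allI impI)
  fix \<eta> :: real assume "\<eta> > 0"
  then have "eventually (\<lambda>k. a k \<le> \<eta> * b k) sequentially" using assms unfolding lo_def by auto
  with assms(2) show "eventually (\<lambda>k. c k \<le> \<eta> * b k) sequentially"
    by eventually_elim simp
qed

lemma lo_O: assumes "lo a b" "eventually (\<lambda>k. b k \<le> C * c k) sequentially" "\<And>k. 0 \<le> c k" "0 \<le> C"
  shows "lo a c"
  unfolding lo_def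
proof (intro allI impI)
  fix \<eta> :: real assume "\<eta> > 0"
  then have "\<eta> / (C + 1) > 0" using assms(4) by simp
  then have "eventually (\<lambda>k. a k \<le> (\<eta> / (C + 1)) * b k) sequentially" using assms unfolding lo_def by auto
  with assms(2) show "eventually (\<lambda>k. a k \<le> \<eta> * c k) sequentially"
  proof eventually_elim
    case (elim k)
    have "a k \<le> (\<eta> / (C + 1)) * (C * c k)"
      using elim \<open>\<eta> / (C + 1) > 0\<close> by (meson mult_left_mono less_imp_le order_trans)
    also have "\<dots> \<le> \<eta> * c k"
    proof -
      have "(\<eta> / (C + 1)) * C \<le> \<eta>" using assms(4) \<open>\<eta> > 0\<close> by (simp add: field_simps)
      then show ?thesis using assms(3)[of k] by (metis mult.assoc mult_right_mono)
    qed
    finally show ?case .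
  qed
qed

lemma lo_cmult: assumes "lo a b" "0 \<le> C" "\<And>k. 0 \<le> b k" shows "lo (\<lambda>k. C * a k) b"
proof -
  have "lo (\<lambda>k. C * a k) (\<lambda>k. C * b k)"
    unfolding lo_def
  proof (intro allI impI)
    fix \<eta> :: real assume "\<eta> > 0"
    then have "eventually (\<lambda>k. a k \<le> \<eta> * b k) sequentially" using assms unfolding lo_def by auto
    then show "eventually (\<lambda>k. C * a k \<le> \<eta> * (C * b k)) sequentially"
      by eventually_elim (metis assms(2) mult.left_commute mult_left_mono)
  qed
  then show ?thesis by (rule lo_O[where C=C]) (use assms in auto)
qed

lemma lo_tendsto: assumes "f \<longlonglongrightarrow> 0" "eventually (\<lambda>k. a k \<le> f k * b k) sequentially" "\<And>k. 0 \<le> b k"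
  shows "lo a b"
  unfolding lo_def
proof (intro allI impI)
  fix \<eta> :: real assume "\<eta> > 0"
  then have "eventually (\<lambda>k. dist (f k) 0 < \<eta>) sequentially" using assms(1) tendstoD by blast
  with assms(2) show "eventually (\<lambda>k. a k \<le> \<eta> * b k) sequentially"
  proof eventually_elim
    case (elim k)
    have "f k * b k \<le> \<eta> * b k" using elim assms(3)[of k] by (intro mult_right_mono) auto
    then show ?case using elim by linarith
  qed
qed

lemma lo_LIMSEQ: assumes "lo a b" "\<And>k. 0 \<le> a k" "\<And>k. 0 < b k" shows "(\<lambda>k. a k / b k) \<longlonglongrightarrow> 0"
proof (rule tendstoI)
  fix \<eta> :: real assume "\<eta> > 0"
  then have "eventually (\<lambda>k. a k \<le> (\<eta>/2) * b k) sequentially" using loD[OF assms(1), of "\<eta>/2"] by auto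
  then show "eventually (\<lambda>k. dist (a k / b k) 0 < \<eta>) sequentially"
  proof eventually_elim
    case (elim k)
    have "a k / b k \<le> \<eta>/2" using elim assms(3)[of k] by (simp add: divide_le_eq)
    moreover have "0 \<le> a k / b k" using assms(2,3)[of k] by simp
    ultimately have "\<bar>a k / b k\<bar> < \<eta>" using \<open>\<eta>>0\<close> by linarith
    then show ?case by (simp only: dist_real_def diff_zero)
  qed
qed

lemma LIMSEQ_lo: assumes "(\<lambda>k. a k / b k) \<longlonglongrightarrow> 0" "\<And>k. 0 < b k" shows "lo a b"
  unfolding lo_def
proof (intro allI impI)
  fix \<eta> :: real assume "\<eta> > 0"
  then have "eventually (\<lambda>k. dist (a k / b k) 0 < \<eta>) sequentially" using assms(1) tendstoD by blast
  then show "eventually (\<lambda>k. a k \<le> \<eta> * b k) sequentially"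
  proof eventually_elim
    case (elim k)
    then have "\<bar>a k / b k\<bar> < \<eta>" by (simp only: dist_real_def diff_zero)
    then have "a k / b k \<le> \<eta>" using abs_ge_self[of "a k / b k"] by linarith
    then show ?case using assms(2)[of k] by (simp add: divide_le_eq mult.commute)
  qed
qed

lemma lo_shift: assumes "lo a b" shows "lo (\<lambda>k. a (Suc k)) (\<lambda>k. b (Suc k))"
  unfolding lo_def
proof (intro allI impI)
  fix \<eta> :: real assume "\<eta> > 0"
  then have "eventually (\<lambda>k. a k \<le> \<eta> * b k) sequentially" using assms unfolding lo_def by auto
  then show "eventually (\<lambda>k. a (Suc k) \<le> \<eta> * b (Suc k)) sequentially"
    using eventually_sequentially_Suc[of "\<lambda>k. a k \<le> \<eta> * b k"] by simp
qed

lemma lo_bounded_to: assumes "lo a b" "\<And>k. 0 \<le> b k" "b \<longlonglongrightarrow> 0" "\<And>k. 0 \<le> a k"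
  shows "a \<longlonglongrightarrow> 0"
proof -
  have "eventually (\<lambda>k. a k \<le> 1 * b k) sequentially" using loD[OF assms(1), of 1] by auto
  then have "eventually (\<lambda>k. norm (a k) \<le> b k) sequentially" using assms(4) by (auto elim: eventually_mono)
  then show ?thesis using Lim_null_comparison assms(3) by blast
qed

lemma deriv_lo:
  fixes G :: "real^'n \<Rightarrow> real^'n"
  assumes "(G has_derivative (\<lambda>h. Bm *v h)) (at xs)" "y \<longlonglongrightarrow> xs"
  shows "lo (\<lambda>k. norm (G (y k) - G xs - Bm *v (y k - xs))) (\<lambda>k. norm (y k - xs))"
  unfolding lo_def
proof (intro allI impI)
  fix \<eta> :: real assume "\<eta> > 0"
  then obtain d where d: "d > 0" "\<And>z. norm (z - xs) < d \<Longrightarrow> norm (G z - G xs - Bm *v (z - xs)) \<le> \<eta> * norm (z - xs)"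
    using assms(1) unfolding has_derivative_within_alt by blast
  have "eventually (\<lambda>k. dist (y k) xs < d) sequentially" using assms(2) d(1) tendstoD by blast
  then show "eventually (\<lambda>k. norm (G (y k) - G xs - Bm *v (y k - xs)) \<le> \<eta> * norm (y k - xs)) sequentially"
    by eventually_elim (use d in \<open>simp add: dist_norm\<close>)
qed

lemma dm_seq:
  fixes a th ep :: "nat \<Rightarrow> real"
  assumes rec: "\<And>k. a (Suc k) \<le> sqrt ((a k)^2 - (th k)^2) + ep k"
    and thle: "\<And>k. (th k)^2 \<le> (a k)^2" and a0: "\<And>k. 0 \<le> a k" and th0: "\<And>k. 0 \<le> th k"
    and sep: "summable ep" and ep0: "\<And>k. 0 \<le> ep k"
  shows "\<exists>\<beta>. \<forall>k. a k \<le> \<beta>" and "th \<longlonglongrightarrow> 0"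
proof -
  define \<beta> where "\<beta> = a 0 + suminf ep"
  have sq: "sqrt ((a k)^2 - (th k)^2) \<le> a k" for k
    using real_sqrt_le_mono[of "(a k)^2 - (th k)^2" "(a k)^2"] a0[of k] by simp
  have part: "a k \<le> a 0 + (\<Sum>i<k. ep i)" for k
  proof (induction k)
    case 0 then show ?case by simp
  next
    case (Suc k) then show ?case using rec[of k] sq[of k] by simp
  qed
  have pb: "(\<Sum>i<k. ep i) \<le> suminf ep" for k
    using sum_le_suminf[OF sep, of "{..<k}"] ep0 by auto
  have bnd: "a k \<le> \<beta>" for k using part[of k] pb[of k] unfolding \<beta>_def by simp
  then show "\<exists>\<beta>. \<forall>k. a k \<le> \<beta>" by blast
  have key: "(th k)^2 \<le> 2 * \<beta> * (a k - a (Suc k) + ep k)" for k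
  proof (cases "a k = 0")
    case True
    then have "th k = 0" using thle[of k] th0[of k] by simp
    moreover have "a (Suc k) \<le> ep k" using rec[of k] True \<open>th k = 0\<close> by simp
    moreover have "\<beta> \<ge> 0" using a0[of 0] bnd[of 0] by linarith
    ultimately show ?thesis using True by simp
  next
    case False
    then have ap: "a k > 0" using a0[of k] by simp
    have "sqrt ((a k)^2 - (th k)^2) \<le> a k - (th k)^2 / (2 * a k)"
    proof (rule real_le_lsqrt)
      have "(th k)^2 / (2 * a k) \<le> (a k)^2 / (2 * a k)" using thle[of k] ap by (simp add: divide_right_mono)
      also have "\<dots> = a k / 2" using ap by (simp add: power2_eq_square)
      finally show "0 \<le> a k - (th k)\<^sup>2 / (2 * a k)" using ap by simp
      have "(a k - (th k)^2 / (2 * a k))^2 = (a k)^2 - (th k)^2 + ((th k)^2 / (2 * a k))^2"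
        using ap by (simp add: power2_diff field_simps power2_eq_square)
      then show "(a k)\<^sup>2 - (th k)\<^sup>2 \<le> (a k - (th k)\<^sup>2 / (2 * a k))\<^sup>2" by simp
    qed
    then have "(th k)^2 / (2 * a k) \<le> a k - a (Suc k) + ep k" using rec[of k] by simp
    then have "(th k)^2 \<le> 2 * a k * (a k - a (Suc k) + ep k)" using ap by (simp add: divide_le_eq mult.commute)
    also have "\<dots> \<le> 2 * \<beta> * (a k - a (Suc k) + ep k)"
    proof (rule mult_right_mono)
      show "2 * a k \<le> 2 * \<beta>" using bnd[of k] by simp
      have "0 \<le> (th k)^2 / (2 * a k)" using ap by simp
      then show "0 \<le> a k - a (Suc k) + ep k" using \<open>(th k)^2 / (2 * a k) \<le> _\<close> by linarith
    qed
    finally show ?thesis .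
  qed
  have "summable (\<lambda>k. (th k)^2)"
  proof (rule summableI_nonneg_bounded)
    fix n
    have "(\<Sum>k<n. (th k)^2) \<le> (\<Sum>k<n. 2 * \<beta> * (a k - a (Suc k) + ep k))"
      by (rule sum_mono) (rule key)
    also have "\<dots> = 2 * \<beta> * ((\<Sum>k<n. (a k - a (Suc k))) + (\<Sum>k<n. ep k))"
      by (simp add: sum_distrib_left[symmetric] sum.distrib)
    also have "(\<Sum>k<n. (a k - a (Suc k))) = a 0 - a n"
      by (simp add: sum_lessThan_telescope')
    also have "2 * \<beta> * (a 0 - a n + (\<Sum>k<n. ep k)) \<le> 2 * \<beta> * (a 0 + suminf ep)"
    proof (rule mult_left_mono)
      show "a 0 - a n + (\<Sum>k<n. ep k) \<le> a 0 + suminf ep" using a0[of n] pb[of n] by simp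
      show "0 \<le> 2 * \<beta>" using a0[of 0] bnd[of 0] by simp
    qed
    finally show "(\<Sum>k<n. (th k)^2) \<le> 2 * \<beta> * (a 0 + suminf ep)" .
  qed simp
  then have "(\<lambda>k. (th k)^2) \<longlonglongrightarrow> 0" by (rule summable_LIMSEQ_zero)
  then have "(\<lambda>k. sqrt ((th k)^2)) \<longlonglongrightarrow> sqrt 0" by (rule tendsto_real_sqrt)
  then show "th \<longlonglongrightarrow> 0" using th0 by simp
qed



lemma iop_bound:
  fixes N :: "real^'n \<Rightarrow> real"
  assumes "is_vec_norm N"
  shows "N (A *v y) \<le> induced_opnorm N A * N y"
proof (cases "y = 0")
  case True then show ?thesis using vn_zero[OF assms] by simp
next
  case False
  obtain c1 where c1: "c1 > 0" "\<And>x. c1 * norm x \<le> N x" using vn_lower[OF assms] by blast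
  obtain c2 where c2: "c2 > 0" "\<And>x. N x \<le> c2 * norm x" using vn_upper[OF assms] by blast
  have bdd: "bdd_above ((\<lambda>x. N (A *v x) / N x) ` {x. x \<noteq> 0})"
  proof (rule bdd_aboveI2)
    fix x :: "real^'n" assume "x \<in> {x. x \<noteq> 0}"
    then have xp: "norm x > 0" by simp
    have "N (A *v x) \<le> c2 * (norm A * norm x)"
      using c2(2)[of "A *v x"] mat_vec_norm[of A x] c2(1) by (meson mult_left_mono less_imp_le order_trans)
    also have "\<dots> = (c2 * norm A / c1) * (c1 * norm x)" using c1 by simp
    also have "\<dots> \<le> (c2 * norm A / c1) * N x"
      using c1 c2 by (intro mult_left_mono) auto
    finally show "N (A *v x) / N x \<le> c2 * norm A / c1"
      using c1(2)[of x] c1(1) xp by (smt (verit) divide_le_eq mult_pos_pos)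
  qed
  have "N (A *v y) / N y \<le> induced_opnorm N A"
    unfolding induced_opnorm_def by (rule cSUP_upper[OF _ bdd]) (use False in simp)
  moreover have "N y > 0" using vn_nonneg[OF assms, of y] vn_eq0[OF assms, of y] False by linarith
  ultimately show ?thesis by (simp add: divide_le_eq)
qed

lemma outer_diff: "outer (a - b) c = outer a c - outer b c"
  by (simp add: outer_def vec_eq_iff algebra_simps)

lemma mat_outer_eq: "(X ** outer a b) = outer (X *v a) b"
  by (simp add: vec_eq_iff mat_outer_row outer_row matrix_mult_dot)

lemma hh_update:
  fixes Hk Bi :: "real^'n^'n"
  shows "(Hk - c *\<^sub>R (Hk ** outer v v) + c *\<^sub>R outer u v) - Bi
     = (Hk - Bi) - c *\<^sub>R ((Hk - Bi) ** outer v v) + c *\<^sub>R outer (u - Bi *v v) v"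
  by (simp add: mat_outer_eq outer_diff matrix_vector_mult_diff_rdistrib algebra_simps)



lemma lo_mono': "lo a b \<Longrightarrow> (\<And>k. c k \<le> a k) \<Longrightarrow> lo c b"
  by (rule lo_mono) (auto intro: always_eventually)

lemma main_lemma:
  fixes F :: "real^'n \<Rightarrow> real^'n"
    and nv :: "real^'n \<Rightarrow> real"
    and dG :: "real^'n \<Rightarrow> real^'n^'n"
    and xs :: "real^'n"
    and DD S :: "(real^'n) set"
    and d K \<tau> :: real
    and x :: "nat \<Rightarrow> real^'n" and H :: "nat \<Rightarrow> real^'n^'n"
  defines "G \<equiv> (\<lambda>x. F x - x)"
  assumes norm: "is_vec_norm nv"
    and S: "open S" "xs \<in> S" "0 < \<tau>" "\<tau> < 1"
      "\<forall>x\<in>S. nv (F x - xs) \<le> \<tau> * nv (x - xs)"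
    and DD: "open DD" "convex DD" "xs \<in> DD"
    and G_deriv: "\<forall>x\<in>DD. (G has_derivative (\<lambda>h. dG x *v h)) (at x)"
    and G_root: "G xs = 0"
    and dG_inv: "invertible (dG xs)"
    and d_pos: "d > 0"
    and dG_hoelder: "\<forall>x\<in>DD. induced_opnorm nv (dG x - dG xs) \<le> K * nv (x - xs) powr d"
    and vnz: "\<forall>k. G (F (x k)) - G (x k) \<noteq> 0"
    and itx: "\<forall>k. x (Suc k) = x k - H k *v G (x k)"
    and itH: "\<forall>k. H (Suc k) =
        H k - (1 / inner (G (F (x k)) - G (x k)) (G (F (x k)) - G (x k))) *\<^sub>R
                 (H k ** outer (G (F (x k)) - G (x k)) (G (F (x k)) - G (x k)))
            + (1 / inner (G (F (x k)) - G (x k)) (G (F (x k)) - G (x k))) *\<^sub>R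
                 outer (F (x k) - x k) (G (F (x k)) - G (x k))"
    and conv: "x \<longlonglongrightarrow> xs"
    and nex: "\<forall>k. x k \<noteq> xs"
    and prem: "(\<lambda>k. nv (x (Suc k) - F (x k)) / nv (x k - xs)) \<longlonglongrightarrow> 0"
  shows "(\<lambda>k. nv (x (Suc k) - xs) / nv (x k - xs)) \<longlonglongrightarrow> 0"
proof -
  obtain c1 where c1: "c1 > 0" "\<And>x. c1 * norm x \<le> nv x" using vn_lower[OF norm] by blast
  obtain c2 where c2: "c2 > 0" "\<And>x. nv x \<le> c2 * norm x" using vn_upper[OF norm] by blast
  have c1': "norm y \<le> (1/c1) * nv y" for y using c1(2)[of y] c1(1) by (simp add: field_simps mult.commute)
  define B where "B = dG xs"
  define Bi where "Bi = matrix_inv B"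
  obtain A' where A': "B ** A' = mat 1 \<and> A' ** B = mat 1"
    using dG_inv unfolding B_def invertible_def by blast
  have BBi: "B ** Bi = mat 1 \<and> Bi ** B = mat 1"
    unfolding Bi_def matrix_inv_def by (rule someI[of _ A']) (rule A')
  have Bi_B: "Bi *v (B *v y) = y" for y using BBi by (simp add: matrix_vector_mul_assoc)
  define Cb where "Cb = norm Bi + 1"
  have Cb: "Cb > 0" unfolding Cb_def by (simp add: add_nonneg_pos)
  have nBi: "norm y \<le> Cb * norm (B *v y)" for y
  proof -
    have "norm y \<le> norm Bi * norm (B *v y)" using mat_vec_norm[of Bi "B *v y"] Bi_B by simp
    also have "\<dots> \<le> Cb * norm (B *v y)" unfolding Cb_def by (simp add: mult_right_mono)
    finally show ?thesis .
  qed
  define nB where "nB = norm B"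
  have nB0: "nB \<ge> 0" unfolding nB_def by simp
  have Bv: "norm (B *v y) \<le> nB * norm y" for y unfolding nB_def by (rule mat_vec_norm)
  have Gd: "(G has_derivative (\<lambda>h. B *v h)) (at xs)" using G_deriv DD(3) B_def by auto
  define Dr where "Dr y = G y - B *v (y - xs)" for y
  define e where "e k = x k - xs" for k
  define ne where "ne k = norm (e k)" for k
  define u where "u k = G (x k)" for k
  define v where "v k = G (F (x k)) - G (x k)" for k
  define r where "r k = x (Suc k) - F (x k)" for k
  define f where "f k = F (x k) - xs" for k
  define s where "s k = G (x (Suc k)) - G (F (x k))" for k
  define w where "w k = u k - Bi *v v k" for k
  define Hh where "Hh k = H k - Bi" for k
  have ne_pos: "ne k > 0" for k using nex unfolding ne_def e_def by auto
  have ne0: "ne k \<ge> 0" for k using ne_pos[of k] by simp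
  have nve_pos: "nv (e k) > 0" for k using c1(2)[of "e k"] c1(1) ne_pos[of k] unfolding ne_def
    by (smt (verit) mult_pos_pos)
  have ne_nv: "ne k \<le> (1/c1) * nv (e k)" for k unfolding ne_def by (rule c1')
  have nv_ne: "nv (e k) \<le> c2 * ne k" for k unfolding ne_def by (rule c2(2))
  have vnz': "v k \<noteq> 0" for k using vnz unfolding v_def by auto
  have vpos: "norm (v k) > 0" for k using vnz'[of k] by simp

  have lo_r_nv: "lo (\<lambda>k. nv (r k)) (\<lambda>k. nv (e k))"
    by (rule LIMSEQ_lo) (use prem nve_pos in \<open>simp_all add: r_def e_def\<close>)
  have lo_r: "lo (\<lambda>k. norm (r k)) ne"
  proof -
    have "lo (\<lambda>k. nv (r k)) ne" by (rule lo_O[OF lo_r_nv, where C=c2]) (use nv_ne ne0 c2 in auto)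
    then have "lo (\<lambda>k. (1/c1) * nv (r k)) ne" by (rule lo_cmult) (use c1 ne0 in auto)
    then show ?thesis by (rule lo_mono) (use c1' in auto)
  qed
  have evS: "eventually (\<lambda>k. x k \<in> S) sequentially" using topological_tendstoD[OF conv S(1,2)] .
  define Cf where "Cf = c2 * \<tau> / c1"
  have Cf0: "Cf \<ge> 0" unfolding Cf_def using c1 c2 S by simp
  have evf_nv: "eventually (\<lambda>k. nv (f k) \<le> \<tau> * nv (e k)) sequentially"
    using evS by eventually_elim (use S(5) in \<open>auto simp: f_def e_def\<close>)
  have evf: "eventually (\<lambda>k. norm (f k) \<le> Cf * ne k) sequentially"
    using evf_nv
  proof eventually_elim
    case (elim k)
    have "norm (f k) \<le> (1/c1) * nv (f k)" by (rule c1')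
    also have "\<dots> \<le> (1/c1) * (\<tau> * (c2 * ne k))"
      using elim nv_ne[of k] S(3) c1 by (smt (verit) divide_pos_pos mult_left_mono)
    also have "\<dots> = Cf * ne k" unfolding Cf_def by simp
    finally show ?case .
  qed
  have e_Suc: "e (Suc k) = r k + f k" for k unfolding e_def r_def f_def by simp
  have evSuc: "eventually (\<lambda>k. ne (Suc k) \<le> (1 + Cf) * ne k) sequentially"
    using loD[OF lo_r zero_less_one] evf
  proof eventually_elim
    case (elim k)
    have "ne (Suc k) \<le> norm (r k) + norm (f k)" unfolding ne_def e_Suc by (rule norm_triangle_ineq)
    then show ?case using elim by (simp add: algebra_simps)
  qed
  define q where "q = (1 + \<tau>) / 2"
  have q: "0 < q" "q < 1" unfolding q_def using S by auto
  have evq: "eventually (\<lambda>k. nv (e (Suc k)) \<le> q * nv (e k)) sequentially"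
  proof -
    have "eventually (\<lambda>k. nv (r k) \<le> ((1 - \<tau>)/2) * nv (e k)) sequentially"
      using loD[OF lo_r_nv, of "(1 - \<tau>)/2"] S(4) by simp
    then show ?thesis using evf_nv
    proof eventually_elim
      case (elim k)
      have "nv (e (Suc k)) \<le> nv (r k) + nv (f k)" unfolding e_Suc by (rule vn_tri[OF norm])
      then show ?case using elim unfolding q_def by (simp add: algebra_simps)
    qed
  qed
  have ne_to: "ne \<longlonglongrightarrow> 0"
  proof -
    have "(\<lambda>k. x k - xs) \<longlonglongrightarrow> 0" using conv by (rule LIM_zero)
    then show ?thesis unfolding ne_def e_def by (rule tendsto_norm_zero)
  qed
  have fconv: "(\<lambda>k. F (x k)) \<longlonglongrightarrow> xs"
  proof -
    have "(\<lambda>k. Cf * ne k) \<longlonglongrightarrow> 0" using tendsto_mult_right_zero[OF ne_to] by simp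
    then have "(\<lambda>k. F (x k) - xs) \<longlonglongrightarrow> 0"
      using Lim_null_comparison[of "\<lambda>k. F (x k) - xs" "\<lambda>k. Cf * ne k"] evf unfolding f_def by blast
    then show ?thesis by (rule LIM_zero_cancel)
  qed
  have xSuc: "(\<lambda>k. x (Suc k)) \<longlonglongrightarrow> xs" using conv by (rule LIMSEQ_Suc)
  have lo_Dx: "lo (\<lambda>k. norm (Dr (x k))) ne"
    using deriv_lo[OF Gd conv] G_root unfolding Dr_def ne_def e_def by simp
  have lo_DF: "lo (\<lambda>k. norm (Dr (F (x k)))) ne"
  proof -
    have "lo (\<lambda>k. norm (Dr (F (x k)))) (\<lambda>k. norm (F (x k) - xs))"
      using deriv_lo[OF Gd fconv] G_root unfolding Dr_def by simp
    then show ?thesis by (rule lo_O[where C=Cf]) (use evf ne0 Cf0 in \<open>auto simp: f_def\<close>)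
  qed
  have lo_DS: "lo (\<lambda>k. norm (Dr (x (Suc k)))) ne"
  proof -
    have "lo (\<lambda>k. norm (Dr (x (Suc k)))) (\<lambda>k. ne (Suc k))"
      using deriv_lo[OF Gd xSuc] G_root unfolding Dr_def ne_def e_def by simp
    then show ?thesis by (rule lo_O[where C="1 + Cf"]) (use evSuc ne0 Cf0 in auto)
  qed
  have fe_u: "f k - e k = u k" for k unfolding f_def e_def u_def G_def by simp
  have u_eq: "u k = B *v e k + Dr (x k)" for k unfolding u_def Dr_def e_def by simp
  have GF_eq: "G (F (x k)) = B *v f k + Dr (F (x k))" for k unfolding Dr_def f_def by simp
  have v_eq: "v k = B *v (B *v e k) + (Dr (F (x k)) - Dr (x k) + B *v Dr (x k))" for k
  proof -
    have "v k = B *v (f k - e k) + Dr (F (x k)) - Dr (x k)"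
      unfolding v_def Dr_def f_def e_def by (simp add: matrix_vector_mult_diff_distrib algebra_simps)
    then show ?thesis using fe_u[of k] u_eq[of k] by (simp add: matrix_vector_right_distrib algebra_simps)
  qed
  have s_eq: "s k = B *v r k + Dr (x (Suc k)) - Dr (F (x k))" for k
    unfolding s_def Dr_def r_def by (simp add: matrix_vector_mult_diff_distrib algebra_simps)
  have evu: "eventually (\<lambda>k. norm (u k) \<le> (nB + 1) * ne k) sequentially"
    using loD[OF lo_Dx zero_less_one]
  proof eventually_elim
    case (elim k)
    have "norm (u k) \<le> norm (B *v e k) + norm (Dr (x k))" unfolding u_eq by (rule norm_triangle_ineq)
    also have "\<dots> \<le> nB * ne k + ne k" using Bv[of "e k"] elim unfolding ne_def by simp
    finally show ?case by (simp add: algebra_simps)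
  qed
  define brk where "brk k = Dr (F (x k)) - Dr (x k) + B *v Dr (x k)" for k
  have lo_brk: "lo (\<lambda>k. norm (brk k)) ne"
  proof -
    have "lo (\<lambda>k. norm (Dr (F (x k))) + (norm (Dr (x k)) + nB * norm (Dr (x k)))) ne"
      by (intro lo_add lo_DF lo_Dx lo_cmult nB0 ne0)
    then show ?thesis
    proof (rule lo_mono')
      fix k
      have "norm (brk k) \<le> norm (Dr (F (x k)) - Dr (x k)) + norm (B *v Dr (x k))"
        unfolding brk_def by (rule norm_triangle_ineq)
      also have "\<dots> \<le> norm (Dr (F (x k))) + norm (Dr (x k)) + nB * norm (Dr (x k))"
        using norm_triangle_ineq4[of "Dr (F (x k))" "Dr (x k)"] Bv[of "Dr (x k)"] by simp
      finally show "norm (brk k) \<le> norm (Dr (F (x k))) + (norm (Dr (x k)) + nB * norm (Dr (x k)))" by simp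
    qed
  qed
  define Cv where "Cv = nB * nB + 1"
  have evv_up: "eventually (\<lambda>k. norm (v k) \<le> Cv * ne k) sequentially"
    using loD[OF lo_brk zero_less_one]
  proof eventually_elim
    case (elim k)
    have "norm (v k) \<le> norm (B *v (B *v e k)) + norm (brk k)" unfolding v_eq brk_def by (rule norm_triangle_ineq)
    also have "norm (B *v (B *v e k)) \<le> nB * (nB * ne k)"
      using Bv[of "B *v e k"] Bv[of "e k"] nB0 unfolding ne_def by (meson mult_left_mono order_trans)
    finally show ?case using elim unfolding Cv_def by (simp add: algebra_simps)
  qed
  define cv where "cv = 1 / (2 * Cb * Cb)"
  have cv0: "cv > 0" unfolding cv_def using Cb by simp
  have evv_lo: "eventually (\<lambda>k. cv * ne k \<le> norm (v k)) sequentially"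
    using loD[OF lo_brk cv0]
  proof eventually_elim
    case (elim k)
    have "ne k \<le> Cb * norm (B *v e k)" unfolding ne_def by (rule nBi)
    also have "\<dots> \<le> Cb * (Cb * norm (B *v (B *v e k)))" using nBi[of "B *v e k"] Cb by simp
    finally have "ne k / (Cb * Cb) \<le> norm (B *v (B *v e k))" using Cb by (simp add: field_simps)
    moreover have "norm (B *v (B *v e k)) \<le> norm (v k) + norm (brk k)"
      using norm_triangle_ineq4[of "v k" "brk k"] unfolding v_eq brk_def by simp
    ultimately have "ne k / (Cb * Cb) - cv * ne k \<le> norm (v k)" using elim by simp
    moreover have "ne k / (Cb * Cb) - cv * ne k = cv * ne k" unfolding cv_def using Cb by (simp add: field_simps)
    ultimately show ?case by simp
  qed
  have lo_s: "lo (\<lambda>k. norm (s k)) ne"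
  proof -
    have "lo (\<lambda>k. nB * norm (r k) + (norm (Dr (x (Suc k))) + norm (Dr (F (x k))))) ne"
      by (intro lo_add lo_cmult lo_r nB0 ne0 lo_DS lo_DF)
    then show ?thesis
    proof (rule lo_mono')
      fix k
      have "norm (s k) \<le> norm (B *v r k) + norm (Dr (x (Suc k))) + norm (Dr (F (x k)))"
        unfolding s_eq by (smt (verit) norm_triangle_ineq norm_triangle_ineq4)
      then show "norm (s k) \<le> nB * norm (r k) + (norm (Dr (x (Suc k))) + norm (Dr (F (x k))))"
        using Bv[of "r k"] by simp
    qed
  qed
  obtain r0 where r0: "r0 > 0" "ball xs r0 \<subseteq> DD" using DD(1,3) unfolding open_contains_ball by blast
  define Kc where "Kc = (c2 / c1) * \<bar>K\<bar> * c2 powr d"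
  have Kc0: "Kc \<ge> 0" unfolding Kc_def using c1 c2 by simp
  have hold: "norm ((dG z - B) *v h) \<le> Kc * norm (z - xs) powr d * norm h" if z: "z \<in> DD" for z h
  proof -
    have "nv ((dG z - B) *v h) \<le> induced_opnorm nv (dG z - B) * nv h" by (rule iop_bound[OF norm])
    also have "\<dots> \<le> (K * nv (z - xs) powr d) * nv h"
      using dG_hoelder z vn_nonneg[OF norm, of h] unfolding B_def by (intro mult_right_mono) auto
    also have "\<dots> \<le> (\<bar>K\<bar> * (c2 * norm (z - xs)) powr d) * (c2 * norm h)"
    proof (rule mult_mono)
      have "nv (z - xs) powr d \<le> (c2 * norm (z - xs)) powr d"
        by (rule powr_mono2) (use d_pos c2(2) vn_nonneg[OF norm] in auto)
      then show "K * nv (z - xs) powr d \<le> \<bar>K\<bar> * (c2 * norm (z - xs)) powr d"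
        by (smt (verit) abs_ge_self abs_ge_zero mult_mono powr_ge_zero)
      show "nv h \<le> c2 * norm h" by (rule c2(2))
      show "0 \<le> \<bar>K\<bar> * (c2 * norm (z - xs)) powr d" by simp
      show "0 \<le> nv h" by (rule vn_nonneg[OF norm])
    qed
    finally have "nv ((dG z - B) *v h) \<le> (\<bar>K\<bar> * (c2 * norm (z - xs)) powr d) * (c2 * norm h)" .
    then have "norm ((dG z - B) *v h) \<le> (1/c1) * ((\<bar>K\<bar> * (c2 * norm (z - xs)) powr d) * (c2 * norm h))"
      using c1' [of "(dG z - B) *v h"] c1(1) by (smt (verit) divide_pos_pos mult_left_mono)
    also have "\<dots> = Kc * norm (z - xs) powr d * norm h"
      unfolding Kc_def using c2 by (simp add: powr_mult)
    finally show ?thesis .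
  qed
  have mv: "norm ((G y - B *v y) - (G z - B *v z)) \<le> (Kc * \<rho> powr d) * norm (y - z)"
    if "\<rho> \<le> r0/2" "norm (y - xs) \<le> \<rho>" "norm (z - xs) \<le> \<rho>" for \<rho> y z
  proof (rule differentiable_bound[where S="cball xs \<rho>" and f'="\<lambda>p h. dG p *v h - B *v h"])
    show "convex (cball xs \<rho>)" by simp
    show "y \<in> cball xs \<rho>" "z \<in> cball xs \<rho>" using that by (auto simp: dist_norm norm_minus_commute)
    have inD: "p \<in> DD" if "p \<in> cball xs \<rho>" for p
      using that \<open>\<rho> \<le> r0/2\<close> r0 by (auto simp: dist_norm)
    fix p assume p: "p \<in> cball xs \<rho>"
    have "((\<lambda>z. G z - B *v z) has_derivative (\<lambda>h. dG p *v h - B *v h)) (at p)"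
      using G_deriv inD[OF p] by (intro has_derivative_diff bounded_linear_imp_has_derivative) auto
    then show "((\<lambda>z. G z - B *v z) has_derivative (\<lambda>h. dG p *v h - B *v h)) (at p within cball xs \<rho>)"
      by (rule has_derivative_at_withinI)
    show "onorm (\<lambda>h. dG p *v h - B *v h) \<le> Kc * \<rho> powr d"
    proof (rule onorm_le)
      fix h
      have "norm (dG p *v h - B *v h) = norm ((dG p - B) *v h)" by (simp add: matrix_vector_mult_diff_rdistrib)
      also have "\<dots> \<le> Kc * norm (p - xs) powr d * norm h" by (rule hold[OF inD[OF p]])
      also have "\<dots> \<le> Kc * \<rho> powr d * norm h"
      proof -
        have "norm (p - xs) powr d \<le> \<rho> powr d"
          using p d_pos by (intro powr_mono2) (auto simp: dist_norm norm_minus_commute)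
        then show ?thesis using Kc0 by (intro mult_right_mono mult_left_mono) auto
      qed
      finally show "norm (dG p *v h - B *v h) \<le> Kc * \<rho> powr d * norm h" .
    qed
  qed
  define Cr where "Cr = 1 + Cf"
  have Cr: "Cr \<ge> 1" unfolding Cr_def using Cf0 by simp
  have evsmall: "eventually (\<lambda>k. Cr * ne k < r0/2) sequentially"
  proof -
    have "(\<lambda>k. Cr * ne k) \<longlonglongrightarrow> 0" using tendsto_mult_right_zero[OF ne_to] by simp
    then show ?thesis using r0(1) by (intro order_tendstoD(2)) auto
  qed
  have evmv: "eventually (\<lambda>k. norm (v k - B *v u k) \<le> (Kc * (Cr * ne k) powr d) * norm (u k)) sequentially"
    using evsmall evf
  proof eventually_elim
    case (elim k)
    have "norm ((G (F (x k)) - B *v F (x k)) - (G (x k) - B *v x k)) \<le> (Kc * (Cr * ne k) powr d) * norm (F (x k) - x k)"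
    proof (rule mv)
      show "Cr * ne k \<le> r0/2" using elim by simp
      show "norm (F (x k) - xs) \<le> Cr * ne k" using elim ne0[of k] unfolding f_def Cr_def by (simp add: algebra_simps)
      show "norm (x k - xs) \<le> Cr * ne k" using Cr ne0[of k] unfolding ne_def e_def
        by (metis mult_le_cancel_right1 not_le order_less_le)
    qed
    moreover have "(G (F (x k)) - B *v F (x k)) - (G (x k) - B *v x k) = v k - B *v u k"
      unfolding v_def u_def G_def by (simp add: matrix_vector_mult_diff_distrib algebra_simps)
    moreover have "F (x k) - x k = u k" unfolding u_def G_def by simp
    ultimately show ?case by simp
  qed
  have w_eq: "w k = Bi *v (B *v u k - v k)" for k
    unfolding w_def by (simp add: matrix_vector_mult_diff_distrib Bi_B)
  define ep where "ep k = norm (w k) / norm (v k)" for k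
  have ep0: "ep k \<ge> 0" for k unfolding ep_def by simp
  define Ce where "Ce = Cb * Kc * (nB + 1) / cv * (Cr / c1) powr d"
  have evep: "eventually (\<lambda>k. ep k \<le> Ce * nv (e k) powr d) sequentially"
    using evmv evu evv_lo
  proof eventually_elim
    case (elim k)
    have "norm (w k) \<le> Cb * norm (v k - B *v u k)"
    proof -
      have "norm (w k) \<le> norm Bi * norm (B *v u k - v k)" unfolding w_eq by (rule mat_vec_norm)
      also have "\<dots> \<le> Cb * norm (B *v u k - v k)" unfolding Cb_def by (intro mult_right_mono) auto
      finally show ?thesis by (simp add: norm_minus_commute)
    qed
    also have "\<dots> \<le> Cb * ((Kc * (Cr * ne k) powr d) * ((nB + 1) * ne k))"
    proof -
      have "(Kc * (Cr * ne k) powr d) * norm (u k) \<le> (Kc * (Cr * ne k) powr d) * ((nB + 1) * ne k)"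
        using elim(2) Kc0 by (intro mult_left_mono) auto
      then show ?thesis using elim(1) Cb by (intro mult_left_mono) auto
    qed
    finally have wb: "norm (w k) \<le> Cb * ((Kc * (Cr * ne k) powr d) * ((nB + 1) * ne k))" .
    have "ep k \<le> Cb * ((Kc * (Cr * ne k) powr d) * ((nB + 1) * ne k)) / (cv * ne k)"
      unfolding ep_def using wb elim(3) cv0 ne_pos[of k]
      by (intro frac_le) (auto intro!: mult_nonneg_nonneg simp: Kc0 less_imp_le[OF Cb] nB0)
    also have "\<dots> = Cb * Kc * (nB + 1) / cv * (Cr * ne k) powr d"
      using ne_pos[of k] cv0 by (simp add: field_simps)
    finally have ep1: "ep k \<le> Cb * Kc * (nB + 1) / cv * (Cr * ne k) powr d" .
    have "(Cr * ne k) powr d \<le> (Cr / c1 * nv (e k)) powr d"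
      using mult_left_mono[OF ne_nv[of k], of Cr] Cr ne0[of k] d_pos by (intro powr_mono2) auto
    also have "(Cr / c1 * nv (e k)) powr d = (Cr / c1) powr d * nv (e k) powr d" by (rule powr_mult)
    finally have "(Cr * ne k) powr d \<le> (Cr / c1) powr d * nv (e k) powr d" .
    moreover have "Cb * Kc * (nB + 1) / cv \<ge> 0" using Cb Kc0 nB0 cv0 by simp
    ultimately have "Cb * Kc * (nB + 1) / cv * (Cr * ne k) powr d \<le> Cb * Kc * (nB + 1) / cv * ((Cr / c1) powr d * nv (e k) powr d)"
      by (rule mult_left_mono)
    then show ?case using ep1 unfolding Ce_def by (simp add: mult.assoc)
  qed
  have sum_nv: "summable (\<lambda>k. nv (e k) powr d)"
  proof -
    obtain N where N: "\<And>k. k \<ge> N \<Longrightarrow> nv (e (Suc k)) \<le> q * nv (e k)"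
      using evq unfolding eventually_sequentially by blast
    show ?thesis
    proof (rule summable_ratio_test[where c="q powr d" and N=N])
      show "q powr d < 1" using powr_less_mono2[OF d_pos, of q 1] q by simp
      fix n assume "n \<ge> N"
      have "nv (e (Suc n)) powr d \<le> (q * nv (e n)) powr d"
        using N[OF \<open>n \<ge> N\<close>] d_pos vn_nonneg[OF norm] by (intro powr_mono2) auto
      also have "\<dots> = q powr d * nv (e n) powr d" by (rule powr_mult)
      finally show "norm (nv (e (Suc n)) powr d) \<le> q powr d * norm (nv (e n) powr d)" by simp
    qed
  qed
  have sum_ep: "summable ep"
  proof -
    obtain N where N: "\<And>k. k \<ge> N \<Longrightarrow> ep k \<le> Ce * nv (e k) powr d"
      using evep unfolding eventually_sequentially by blast
    show ?thesis
      by (rule summable_comparison_test'[OF summable_mult[OF sum_nv, of Ce], of N]) (use N ep0 in auto)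
  qed
  have ep_to: "ep \<longlonglongrightarrow> 0" using sum_ep by (rule summable_LIMSEQ_zero)
  define cc where "cc k = 1 / inner (v k) (v k)" for k
  have uk: "F (x k) - x k = u k" for k unfolding u_def G_def by simp
  have itH': "H (Suc k) = H k - cc k *\<^sub>R (H k ** outer (v k) (v k)) + cc k *\<^sub>R outer (u k) (v k)" for k
    using itH unfolding cc_def v_def uk[symmetric] by blast
  have Hh_rec: "Hh (Suc k) = Hh k - cc k *\<^sub>R (Hh k ** outer (v k) (v k)) + cc k *\<^sub>R outer (w k) (v k)" for k
    unfolding Hh_def w_def itH' by (rule hh_update)
  define th where "th k = norm (Hh k *v v k) / norm (v k)" for k
  have vv: "inner (v k) (v k) = (norm (v k))^2" for k by (simp add: power2_norm_eq_inner)
  have th2: "(th k)^2 = (norm (Hh k *v v k))^2 / inner (v k) (v k)" for k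
    unfolding th_def vv by (simp add: power_divide)
  have proj: "(norm (Hh k - cc k *\<^sub>R (Hh k ** outer (v k) (v k))))^2 = (norm (Hh k))^2 - (th k)^2" for k
    unfolding cc_def th2 by (rule proj_norm[OF vnz'])
  have dm_rec: "norm (Hh (Suc k)) \<le> sqrt ((norm (Hh k))^2 - (th k)^2) + ep k" for k
  proof -
    have "norm (Hh (Suc k)) \<le> norm (Hh k - cc k *\<^sub>R (Hh k ** outer (v k) (v k))) + norm (cc k *\<^sub>R outer (w k) (v k))"
      unfolding Hh_rec by (rule norm_triangle_ineq)
    also have "norm (Hh k - cc k *\<^sub>R (Hh k ** outer (v k) (v k))) = sqrt ((norm (Hh k))^2 - (th k)^2)"
      by (metis proj norm_ge_zero real_sqrt_abs real_sqrt_unique abs_of_nonneg)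
    also have "norm (cc k *\<^sub>R outer (w k) (v k)) = ep k"
      unfolding cc_def ep_def vv using vpos[of k] by (simp add: outer_norm power2_eq_square)
    finally show ?thesis .
  qed
  have dm_le: "(th k)^2 \<le> (norm (Hh k))^2" for k
    using proj[of k] by (metis diff_ge_0_iff_ge zero_le_power2)
  have th0: "th k \<ge> 0" for k unfolding th_def by simp
  obtain \<beta> where \<beta>: "\<And>k. norm (Hh k) \<le> \<beta>"
    using dm_seq(1)[of "\<lambda>k. norm (Hh k)" th ep, OF dm_rec dm_le norm_ge_zero th0 sum_ep ep0] by blast
  have th_to: "th \<longlonglongrightarrow> 0"
    using dm_seq(2)[of "\<lambda>k. norm (Hh k)" th ep, OF dm_rec dm_le norm_ge_zero th0 sum_ep ep0] .
  define ck where "ck k = inner (v k) (u k) / inner (v k) (v k)" for k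
  have rH: "r k = - (H k *v u k) - u k" for k
    unfolding r_def using itx unfolding u_def G_def by (simp add: algebra_simps)
  have Hv: "H (Suc k) *v v k = u k" for k
    using vpos[of k] unfolding itH' cc_def
    by (simp add: matrix_vector_mult_add_rdistrib matrix_vector_mult_diff_rdistrib mat_outer_mv outer_mv
        scaleR_matrix_vector_assoc[symmetric])
  have Hu: "H (Suc k) *v u k = H k *v u k - ck k *\<^sub>R (H k *v v k) + ck k *\<^sub>R u k" for k
    unfolding itH' cc_def ck_def
    by (simp add: matrix_vector_mult_add_rdistrib matrix_vector_mult_diff_rdistrib mat_outer_mv outer_mv
        scaleR_matrix_vector_assoc[symmetric])
  have uS: "u (Suc k) = u k + v k + s k" for k unfolding u_def v_def s_def by simp
  have key: "u k + v k = r k + ck k *\<^sub>R (H k *v v k - u k) - (H (Suc k) *v s k + s k) - r (Suc k)" for k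
  proof -
    have Hku: "H k *v u k = - r k - u k" unfolding rH[of k] by simp
    have "r (Suc k) = - (H (Suc k) *v (u k + v k + s k)) - (u k + v k + s k)"
      using rH[of "Suc k"] uS[of k] by simp
    also have "\<dots> = - (H (Suc k) *v u k) - u k - (H (Suc k) *v s k) - u k - v k - s k"
      by (simp add: matrix_vector_right_distrib Hv algebra_simps)
    also have "\<dots> = r k + ck k *\<^sub>R (H k *v v k - u k) - (H (Suc k) *v s k + s k) - u k - v k"
      unfolding Hu Hku by (simp add: algebra_simps)
    finally show ?thesis by (simp add: algebra_simps)
  qed
  have Hvu: "H k *v v k - u k = Hh k *v v k - w k" for k
    unfolding Hh_def w_def by (simp add: matrix_vector_mult_diff_rdistrib)
  have ck_b: "\<bar>ck k\<bar> \<le> norm (u k) / norm (v k)" for k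
  proof -
    have "\<bar>inner (v k) (u k)\<bar> \<le> norm (v k) * norm (u k)" by (rule Cauchy_Schwarz_ineq2)
    then show ?thesis unfolding ck_def vv using vpos[of k]
      by (simp add: abs_divide power2_eq_square divide_le_eq field_simps)
  qed
  have lo_c: "lo (\<lambda>k. norm (ck k *\<^sub>R (H k *v v k - u k))) ne"
  proof (rule lo_tendsto[where f="\<lambda>k. (nB + 1) * (th k + ep k)"])
    show "(\<lambda>k. (nB + 1) * (th k + ep k)) \<longlonglongrightarrow> 0"
      using tendsto_mult_right_zero[OF tendsto_add_zero[OF th_to ep_to]] by simp
    show "0 \<le> ne k" for k by (rule ne0)
    show "eventually (\<lambda>k. norm (ck k *\<^sub>R (H k *v v k - u k)) \<le> (nB + 1) * (th k + ep k) * ne k) sequentially"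
      using evu
    proof eventually_elim
      case (elim k)
      have "norm (ck k *\<^sub>R (H k *v v k - u k)) \<le> (norm (u k) / norm (v k)) * (norm (Hh k *v v k) + norm (w k))"
        unfolding Hvu norm_scaleR using ck_b[of k] norm_triangle_ineq4[of "Hh k *v v k" "w k"]
        by (intro mult_mono) auto
      also have "\<dots> = norm (u k) * (th k + ep k)"
        unfolding th_def ep_def using vpos[of k] by (simp add: field_simps)
      also have "\<dots> \<le> (nB + 1) * ne k * (th k + ep k)"
        using elim th0[of k] ep0[of k] by (intro mult_right_mono) auto
      finally show ?case by (simp add: algebra_simps)
    qed
  qed
  define Ch where "Ch = \<beta> + norm Bi + 1"
  have Ch0: "Ch \<ge> 0" unfolding Ch_def using \<beta>[of 0] by (smt (verit) norm_ge_zero)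
  have lo_Hs: "lo (\<lambda>k. norm (H (Suc k) *v s k + s k)) ne"
  proof -
    have "lo (\<lambda>k. Ch * norm (s k)) ne" by (intro lo_cmult lo_s Ch0 ne0)
    then show ?thesis
    proof (rule lo_mono')
      fix k
      have "norm (H (Suc k)) \<le> \<beta> + norm Bi"
        using norm_triangle_ineq[of "Hh (Suc k)" Bi] \<beta>[of "Suc k"] unfolding Hh_def by simp
      then have "norm (H (Suc k) *v s k) \<le> (\<beta> + norm Bi) * norm (s k)"
        using mat_vec_norm[of "H (Suc k)" "s k"] by (meson mult_right_mono norm_ge_zero order_trans)
      then show "norm (H (Suc k) *v s k + s k) \<le> Ch * norm (s k)"
        unfolding Ch_def using norm_triangle_ineq[of "H (Suc k) *v s k" "s k"] by (simp add: algebra_simps)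
    qed
  qed
  have lo_rS: "lo (\<lambda>k. norm (r (Suc k))) ne"
    using lo_shift[OF lo_r] by (rule lo_O[where C="1 + Cf"]) (use evSuc ne0 Cf0 in auto)
  have lo_uv: "lo (\<lambda>k. norm (u k + v k)) ne"
  proof -
    have "lo (\<lambda>k. norm (r k) + (norm (ck k *\<^sub>R (H k *v v k - u k)) + (norm (H (Suc k) *v s k + s k) + norm (r (Suc k))))) ne"
      by (intro lo_add lo_r lo_c lo_Hs lo_rS)
    then show ?thesis
    proof (rule lo_mono')
      fix k
      show "norm (u k + v k) \<le> norm (r k) + (norm (ck k *\<^sub>R (H k *v v k - u k)) + (norm (H (Suc k) *v s k + s k) + norm (r (Suc k))))"
        unfolding key by (smt (verit) norm_triangle_ineq norm_triangle_ineq4)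
    qed
  qed
  have lo_f: "lo (\<lambda>k. norm (f k)) ne"
  proof -
    have "lo (\<lambda>k. Cb * (norm (u k + v k) + norm (Dr (F (x k))))) ne"
      by (intro lo_cmult lo_add lo_uv lo_DF ne0) (use Cb in simp)
    then show ?thesis
    proof (rule lo_mono')
      fix k
      have "f k = Bi *v (B *v f k)" by (simp add: Bi_B)
      also have "B *v f k = (u k + v k) - Dr (F (x k))" using GF_eq[of k] unfolding u_def v_def by simp
      finally have "norm (f k) \<le> norm Bi * norm ((u k + v k) - Dr (F (x k)))"
        using mat_vec_norm by metis
      also have "\<dots> \<le> Cb * (norm (u k + v k) + norm (Dr (F (x k))))"
        unfolding Cb_def by (intro mult_mono norm_triangle_ineq4) auto
      finally show "norm (f k) \<le> Cb * (norm (u k + v k) + norm (Dr (F (x k))))" .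
    qed
  qed
  have lo_fin: "lo (\<lambda>k. nv (e (Suc k))) (\<lambda>k. nv (e k))"
  proof -
    have "lo (\<lambda>k. c2 * norm (f k)) ne" by (intro lo_cmult lo_f ne0) (use c2 in simp)
    then have "lo (\<lambda>k. c2 * norm (f k)) (\<lambda>k. nv (e k))"
      by (rule lo_O[where C="1/c1"]) (use ne_nv c1 vn_nonneg[OF norm] in auto)
    then have "lo (\<lambda>k. nv (r k) + c2 * norm (f k)) (\<lambda>k. nv (e k))" by (intro lo_add lo_r_nv)
    then show ?thesis
    proof (rule lo_mono')
      fix k
      show "nv (e (Suc k)) \<le> nv (r k) + c2 * norm (f k)"
        unfolding e_Suc using vn_tri[OF norm, of "r k" "f k"] c2(2)[of "f k"] by simp
    qed
  qed
  have "(\<lambda>k. nv (e (Suc k)) / nv (e k)) \<longlonglongrightarrow> 0"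
    by (rule lo_LIMSEQ[OF lo_fin]) (use vn_nonneg[OF norm] nve_pos in auto)
  then show ?thesis unfolding e_def .
qed

theorem corollary2:
  fixes F :: "real^'n \<Rightarrow> real^'n"
    and nv :: "real^'n \<Rightarrow> real"
    and dG :: "real^'n \<Rightarrow> real^'n^'n"
    and xs :: "real^'n"
    and D S :: "(real^'n) set"
    and N' :: "((real^'n) \<times> (real^'n^'n)) set"
    and M :: "real^'n^'n"
    and d K \<mu>2 \<tau> :: real
  defines "G \<equiv> (\<lambda>x. F x - x)"
  assumes norm: "is_vec_norm nv"
    and MM_conv: "open S" "xs \<in> S" "0 < \<tau>" "\<tau> < 1"
      "\<forall>x\<in>S. nv (F x - xs) \<le> \<tau> * nv (x - xs)"
    and D: "open D" "convex D" "xs \<in> D"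
    and G_deriv: "\<forall>x\<in>D. (G has_derivative (\<lambda>h. dG x *v h)) (at x)"
    and G_root: "G xs = 0"
    and dG_inv: "invertible (dG xs)"
    and d_pos: "d > 0"
    and dG_hoelder: "\<forall>x\<in>D. induced_opnorm nv (dG x - dG xs) \<le> K * nv (x - xs) powr d"
    and mu2: "\<mu>2 \<ge> 0"
    and M: "invertible M" "transpose M = M"
    and N': "open N'" "(xs, matrix_inv (dG xs)) \<in> N'"
    and cond: "\<forall>(x, H)\<in>N'. G (F x) - G x \<noteq> 0 \<longrightarrow>
         nv (M *v (G (F x) - G x) - matrix_inv M *v (G (F x) - G x))
           / nv (matrix_inv M *v (G (F x) - G x))
         \<le> \<mu>2 * nv (G (F x) - G x) powr d"
  shows "\<exists>\<epsilon>>0. \<exists>\<delta>>0. \<forall>(x :: nat \<Rightarrow> real^'n) (H :: nat \<Rightarrow> real^'n^'n).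
     nv (x 0 - xs) < \<epsilon> \<and> M_norm M (H 0 - matrix_inv (dG xs)) < \<delta> \<and>
     (\<forall>k. G (F (x k)) - G (x k) \<noteq> 0) \<and>
     (\<forall>k. x (Suc k) = x k - H k *v G (x k)) \<and>
     (\<forall>k. H (Suc k) =
        H k - (1 / inner (G (F (x k)) - G (x k)) (G (F (x k)) - G (x k))) *\<^sub>R
                 (H k ** outer (G (F (x k)) - G (x k)) (G (F (x k)) - G (x k)))
            + (1 / inner (G (F (x k)) - G (x k)) (G (F (x k)) - G (x k))) *\<^sub>R
                 outer (F (x k) - x k) (G (F (x k)) - G (x k))) \<and>
     x \<longlonglongrightarrow> xs \<and>
     (\<forall>k. x k \<noteq> xs) \<and>
     (\<lambda>k. nv (x (Suc k) - F (x k)) / nv (x k - xs)) \<longlonglongrightarrow> 0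
     \<longrightarrow> (\<lambda>k. nv (x (Suc k) - xs) / nv (x k - xs)) \<longlonglongrightarrow> 0"
  proof -
  show ?thesis
    unfolding G_def
    apply (intro exI[of _ "1::real"] conjI zero_less_one allI impI)
    apply (elim conjE)
    apply (rule main_lemma[where F=F and nv=nv and dG=dG and xs=xs and DD=D and S=S and d=d and K=K and \<tau>=\<tau>])
    using norm MM_conv D G_deriv G_root dG_inv d_pos dG_hoelder unfolding G_def
    by simp_all
qed

end
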